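(* Let $p\ge1$, $n>1$ be integers, $\mathcal E,\mathcal F$ Hilbert spaces, and for $i=1,\ldots,n-1$ let $\Phi_i(z)=\sum_{\ell=0}^pA_\ell^{(i)}z^\ell\in H^\infty\mathcal L(\mathcal E)$ and $\tilde\Phi_i(z)=\sum_{\ell=0}^p\tilde A_\ell^{(i)}z^\ell\in H^\infty\mathcal L(\mathcal F)$ with $A_\ell^{(i)}\in\mathcal L(\mathcal E)$, $\tilde A_\ell^{(i)}\in\mathcal L(\mathcal F)$. Then the $n$-tuple $(T_{\Phi_1},\dots,T_{\Phi_{n-1}},T_z)$ on $H^2(\mathcal E)$ is unitarily equivalent to the $n$-tuple $(T_{\tilde\Phi_1},\dots,T_{\tilde\Phi_{n-1}},T_z)$ on $H^2(\mathcal F)$ if and only if the tuples $(A_\ell^{(i)})_{i=1,\ell=0}^{n-1,p}$ and $(\tilde A_\ell^{(i)})_{i=1,\ell=0}^{n-1,p}$ are unitarily equivalent, i.e. there is a unitary $W:\mathcal E\to\mathcal F$ with $WA_\ell^{(i)}W^*=\tilde A_\ell^{(i)}$ for all $i,\ell$.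
   Context: $H^2(\mathcal E)$ is the $\mathcal E$-valued Hardy space on $\mathbb D$, $H^\infty\mathcal L(\mathcal E)$ the bounded analytic $\mathcal L(\mathcal E)$-valued functions on $\mathbb D$, $T_\Phi$ the multiplication operator $f\mapsto\Phi f$ on $H^2(\mathcal E)$, and $T_z$ the unilateral shift. Unitary equivalence of operator tuples means a single unitary intertwines all corresponding entries. *)

theory Defs
  imports "HOL-Analysis.Analysis"
begin

class complex_hilbert = banach +
  fixes scaleC :: "complex \<Rightarrow> 'a \<Rightarrow> 'a" (infixr \<open>*\<^sub>C\<close> 75)
    and cinner :: "'a \<Rightarrow> 'a \<Rightarrow> complex"
  assumes scaleC_add_right: "a *\<^sub>C (x + y) = a *\<^sub>C x + a *\<^sub>C y"
    and scaleC_add_left: "(a + b) *\<^sub>C x = a *\<^sub>C x + b *\<^sub>C x"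
    and scaleC_scaleC: "a *\<^sub>C (b *\<^sub>C x) = (a * b) *\<^sub>C x"
    and scaleC_one: "1 *\<^sub>C x = x"
    and scaleR_scaleC: "scaleR r x = complex_of_real r *\<^sub>C x"
    and cinner_add_right: "cinner x (y + z) = cinner x y + cinner x z"
    and cinner_scaleC_right: "cinner x (a *\<^sub>C y) = a * cinner x y"
    and cinner_commute: "cinner y x = cnj (cinner x y)"
    and cinner_self_norm: "cinner x x = complex_of_real ((norm x)\<^sup>2)"

definition bounded_clinear :: "('a::complex_hilbert \<Rightarrow> 'b::complex_hilbert) \<Rightarrow> bool" where
  "bounded_clinear T \<longleftrightarrow>
     (\<forall>x y. T (x + y) = T x + T y) \<and> (\<forall>c x. T (c *\<^sub>C x) = c *\<^sub>C T x) \<and>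
     (\<exists>K. \<forall>x. norm (T x) \<le> K * norm x)"

definition cadjoint :: "('a::complex_hilbert \<Rightarrow> 'b::complex_hilbert) \<Rightarrow> 'b \<Rightarrow> 'a" where
  "cadjoint T = (\<lambda>y. THE x. \<forall>z. cinner (T z) y = cinner z x)"

definition unitary :: "('a::complex_hilbert \<Rightarrow> 'b::complex_hilbert) \<Rightarrow> bool" where
  "unitary W \<longleftrightarrow> bounded_clinear W \<and> surj W \<and> (\<forall>x y. cinner (W x) (W y) = cinner x y)"

definition sq_summable :: "(nat \<Rightarrow> 'a::complex_hilbert) \<Rightarrow> bool" where
  "sq_summable c \<longleftrightarrow> summable (\<lambda>n. (norm (c n))\<^sup>2)"

definition power_ser :: "(nat \<Rightarrow> 'a::complex_hilbert) \<Rightarrow> complex \<Rightarrow> 'a" where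
  "power_ser c z = (\<Sum>n. (z ^ n) *\<^sub>C c n)"

definition hardy2 :: "(complex \<Rightarrow> 'a::complex_hilbert) set" where
  "hardy2 = {f. \<exists>c. sq_summable c \<and>
                   (\<forall>z. f z = (if norm z < 1 then power_ser c z else 0))}"

definition h2_coeffs :: "(complex \<Rightarrow> 'a::complex_hilbert) \<Rightarrow> nat \<Rightarrow> 'a" where
  "h2_coeffs f = (THE c. sq_summable c \<and> (\<forall>z. norm z < 1 \<longrightarrow> f z = power_ser c z))"

definition h2_inner :: "(complex \<Rightarrow> 'a::complex_hilbert) \<Rightarrow> (complex \<Rightarrow> 'a) \<Rightarrow> complex" where
  "h2_inner f g = (\<Sum>n. cinner (h2_coeffs f n) (h2_coeffs g n))"

text \<open>Unitary operator H^2(E) \<rightarrow> H^2(F) (acting on the function space, only its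
restriction to H^2(E) matters).\<close>
definition h2_unitary :: "((complex \<Rightarrow> 'a::complex_hilbert) \<Rightarrow> (complex \<Rightarrow> 'b::complex_hilbert)) \<Rightarrow> bool" where
  "h2_unitary U \<longleftrightarrow>
     U ` hardy2 = hardy2 \<and>
     (\<forall>f\<in>hardy2. \<forall>g\<in>hardy2. U (\<lambda>z. f z + g z) = (\<lambda>z. U f z + U g z)) \<and>
     (\<forall>f\<in>hardy2. \<forall>c. U (\<lambda>z. c *\<^sub>C f z) = (\<lambda>z. c *\<^sub>C U f z)) \<and>
     (\<forall>f\<in>hardy2. \<forall>g\<in>hardy2. h2_inner (U f) (U g) = h2_inner f g)"

definition mult_op :: "(complex \<Rightarrow> 'a \<Rightarrow> 'a) \<Rightarrow> (complex \<Rightarrow> 'a::complex_hilbert) \<Rightarrow> complex \<Rightarrow> 'a" where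
  "mult_op \<Phi> f = (\<lambda>z. if norm z < 1 then \<Phi> z (f z) else 0)"

definition shift_op :: "(complex \<Rightarrow> 'a::complex_hilbert) \<Rightarrow> complex \<Rightarrow> 'a" where
  "shift_op = mult_op (\<lambda>z x. z *\<^sub>C x)"

definition op_poly :: "nat \<Rightarrow> (nat \<Rightarrow> 'a \<Rightarrow> 'a) \<Rightarrow> complex \<Rightarrow> 'a::complex_hilbert \<Rightarrow> 'a" where
  "op_poly p A = (\<lambda>z x. \<Sum>l\<le>p. (z ^ l) *\<^sub>C A l x)"

end

theory Submission
  imports Defs
begin


context complex_hilbert begin

lemma scaleC_zero_left[simp]: "0 *\<^sub>C x = 0"
proof -
  have "0 *\<^sub>C x = 0 *\<^sub>C x + 0 *\<^sub>C x" using scaleC_add_left[of 0 0 x] by simp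
  then show ?thesis by simp
qed

lemma scaleC_zero_right[simp]: "a *\<^sub>C 0 = 0"
proof -
  have "a *\<^sub>C 0 = a *\<^sub>C 0 + a *\<^sub>C 0" using scaleC_add_right[of a 0 0] by simp
  then show ?thesis by simp
qed

lemma scaleC_minus_right: "a *\<^sub>C (- x) = - (a *\<^sub>C x)"
proof -
  have "a *\<^sub>C x + a *\<^sub>C (- x) = 0" using scaleC_add_right[of a x "-x"] by simp
  then have "- (a *\<^sub>C x) = a *\<^sub>C (- x)" by (rule minus_unique)
  then show ?thesis by simp
qed

lemma scaleC_diff_right: "a *\<^sub>C (x - y) = a *\<^sub>C x - a *\<^sub>C y"
  using scaleC_add_right[of a x "-y"] scaleC_minus_right by simp

end

lemma cinner_zero_right[simp]: "cinner x 0 = 0"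
  using cinner_add_right[of x 0 0] by simp

lemma cinner_zero_left[simp]: "cinner 0 x = 0"
  using cinner_commute[of x 0] by simp

lemma cinner_add_left: "cinner (x + y) z = cinner x z + cinner y z"
  by (simp add: cinner_commute[of "x+y" z] cinner_add_right cinner_commute[of x z] cinner_commute[of y z])

lemma cinner_minus_right: "cinner x (- y) = - cinner x y"
proof -
  have "cinner x y + cinner x (- y) = 0" using cinner_add_right[of x y "-y"] by simp
  then have "- (cinner x y) = cinner x (- y)" by (rule minus_unique)
  then show ?thesis by simp
qed

lemma cinner_diff_right: "cinner x (y - z) = cinner x y - cinner x z"
  using cinner_add_right[of x y "-z"] cinner_minus_right by simp

lemma cinner_minus_left: "cinner (- x) y = - cinner x y"
  by (simp add: cinner_commute[of "-x" y] cinner_minus_right cinner_commute[of x y])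

lemma cinner_diff_left: "cinner (x - y) z = cinner x z - cinner y z"
  using cinner_add_left[of x "-y" z] cinner_minus_left by simp

lemma cinner_scaleC_left: "cinner (a *\<^sub>C x) y = cnj a * cinner x y"
  by (simp add: cinner_commute[of "a *\<^sub>C x" y] cinner_scaleC_right cinner_commute[of x y])

lemma cinner_self_eq_0: "cinner x x = 0 \<longleftrightarrow> x = 0"
  using cinner_self_norm[of x] by simp

lemma cinner_eq_right: "(\<And>z. cinner z x = cinner z y) \<Longrightarrow> x = y"
proof -
  assume h: "\<And>z. cinner z x = cinner z y"
  have "cinner (x - y) (x - y) = 0" by (simp add: cinner_diff_right h)
  then show ?thesis by (simp add: cinner_self_eq_0)
qed

lemma norm_scaleC: "norm (a *\<^sub>C x) = cmod a * norm x"
proof -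
  have "complex_of_real ((norm (a *\<^sub>C x))\<^sup>2) = cinner (a *\<^sub>C x) (a *\<^sub>C x)"
    by (simp add: cinner_self_norm)
  also have "\<dots> = cnj a * a * cinner x x"
    by (simp add: cinner_scaleC_left cinner_scaleC_right)
  also have "\<dots> = complex_of_real ((cmod a)\<^sup>2) * complex_of_real ((norm x)\<^sup>2)"
    using complex_norm_square[of a] by (simp add: cinner_self_norm mult.commute)
  also have "\<dots> = complex_of_real ((cmod a * norm x)\<^sup>2)"
    by (simp add: power_mult_distrib)
  finally have "(norm (a *\<^sub>C x))\<^sup>2 = (cmod a * norm x)\<^sup>2" using of_real_eq_iff by blast
  then show ?thesis by (simp add: power2_eq_iff_nonneg)
qed

lemma cauchy_schwarz: "cmod (cinner y x) \<le> norm y * norm x"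
proof (cases "y = 0")
  case True then show ?thesis by simp
next
  case False
  define t where "t = cinner y x / complex_of_real ((norm y)\<^sup>2)"
  define v where "v = x - t *\<^sub>C y"
  have ny: "complex_of_real ((norm y)\<^sup>2) \<noteq> 0" using False by simp
  have "cinner y v = cinner y x - t * cinner y y"
    by (simp add: v_def cinner_diff_right cinner_scaleC_right)
  also have "\<dots> = 0" using ny by (simp add: t_def cinner_self_norm)
  finally have yv: "cinner y v = 0" .
  have vy: "cinner v y = 0" using yv cinner_commute[of v y] by simp
  have xv: "x = v + t *\<^sub>C y" by (simp add: v_def)
  have "cinner x x = cinner v v + cnj t * t * cinner y y"
    unfolding xv by (simp add: cinner_add_left cinner_add_right cinner_scaleC_left cinner_scaleC_right yv vy)
  also have "cnj t * t = complex_of_real ((cmod t)\<^sup>2)" using complex_norm_square[of t] by (simp add: mult.commute)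
  finally have "complex_of_real ((norm x)\<^sup>2) = complex_of_real ((norm v)\<^sup>2 + (cmod t)\<^sup>2 * (norm y)\<^sup>2)"
    by (simp add: cinner_self_norm)
  then have e: "(norm x)\<^sup>2 = (norm v)\<^sup>2 + (cmod t)\<^sup>2 * (norm y)\<^sup>2" using of_real_eq_iff by blast
  have "(cmod t * norm y)\<^sup>2 \<le> (norm x)\<^sup>2" using e by (simp add: power_mult_distrib)
  then have "cmod t * norm y \<le> norm x" by (rule power2_le_imp_le) simp
  moreover have "cmod (cinner y x) = cmod t * (norm y)\<^sup>2"
    using ny by (simp add: t_def norm_divide norm_power)
  ultimately have "cmod (cinner y x) = (cmod t * norm y) * norm y" and "cmod t * norm y \<le> norm x"
    by (simp_all add: power2_eq_square)
  moreover have "(cmod t * norm y) * norm y \<le> norm x * norm y"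
    using calculation(2) by (rule mult_right_mono) simp
  moreover have "norm x * norm y = norm y * norm x" by (rule mult.commute)
  ultimately show ?thesis by linarith
qed

lemma bounded_linear_cinner: "bounded_linear (cinner (y::'a::complex_hilbert))"
proof (rule bounded_linear_intro[where K="norm y"])
  show "cinner y (x + z) = cinner y x + cinner y z" for x z by (simp add: cinner_add_right)
  show "cinner y (r *\<^sub>R x) = r *\<^sub>R cinner y x" for r x
    by (simp add: scaleR_scaleC cinner_scaleC_right scaleR_conv_of_real)
  show "norm (cinner y x) \<le> norm x * norm y" for x
    using cauchy_schwarz[of y x] by (simp add: mult.commute)
qed

lemma bounded_linear_scaleC: "bounded_linear (\<lambda>x::'a::complex_hilbert. a *\<^sub>C x)"
proof (rule bounded_linear_intro[where K="cmod a"])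
  show "a *\<^sub>C (x + z) = a *\<^sub>C x + a *\<^sub>C z" for x z by (simp add: scaleC_add_right)
  show "a *\<^sub>C (r *\<^sub>R x) = r *\<^sub>R (a *\<^sub>C x)" for r x
    by (simp add: scaleR_scaleC scaleC_scaleC mult.commute)
  show "norm (a *\<^sub>C x) \<le> norm x * cmod a" for x
    by (simp add: norm_scaleC mult.commute)
qed




lemma sq_summable_bounded:
  fixes c :: "nat \<Rightarrow> 'a::complex_hilbert"
  assumes "sq_summable c" shows "\<exists>M. \<forall>n. norm (c n) \<le> M"
proof -
  let ?S = "suminf (\<lambda>n. (norm (c n))\<^sup>2)"
  have s: "summable (\<lambda>n. (norm (c n))\<^sup>2)" using assms by (simp add: sq_summable_def)
  have "norm (c n) \<le> 1 + ?S" for n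
  proof -
    have "sum (\<lambda>n. (norm (c n))\<^sup>2) {n} \<le> ?S"
      by (rule sum_le_suminf[OF s]) auto
    then have a: "(norm (c n))\<^sup>2 \<le> ?S" by simp
    have "norm (c n) \<le> 1 + (norm (c n))\<^sup>2"
    proof -
      have "0 \<le> (norm (c n) - 1)\<^sup>2" by simp
      then have h: "2 * norm (c n) \<le> 1 + norm (c n) * norm (c n)" by (simp add: power2_eq_square algebra_simps)
      have "0 \<le> norm (c n)" by simp
      then show ?thesis unfolding power2_eq_square using h by linarith
    qed
    then show ?thesis using a by linarith
  qed
  then show ?thesis by blast
qed

lemma ps_summable:
  fixes c :: "nat \<Rightarrow> 'a::complex_hilbert"
  assumes M: "\<And>n. norm (c n) \<le> M" and z: "cmod z < 1"
  shows "summable (\<lambda>n. z ^ n *\<^sub>C c n)"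
proof (rule summable_comparison_test'[where g="\<lambda>n. M * cmod z ^ n" and N=0])
  show "summable (\<lambda>n. M * cmod z ^ n)"
    by (rule summable_mult) (rule summable_geometric, simp add: z)
  show "norm (z ^ n *\<^sub>C c n) \<le> M * cmod z ^ n" for n
    using mult_left_mono[OF M[of n], of "cmod z ^ n"]
    by (simp add: norm_scaleC norm_power mult.commute)
qed

lemma ps_sums:
  fixes c :: "nat \<Rightarrow> 'a::complex_hilbert"
  assumes M: "\<And>n. norm (c n) \<le> M" and z: "cmod z < 1"
  shows "(\<lambda>n. z ^ n *\<^sub>C c n) sums power_ser c z"
  unfolding power_ser_def by (rule summable_sums[OF ps_summable[OF M z]])

lemma scalar_ps_zero0:
  fixes a :: "nat \<Rightarrow> complex"
  assumes "\<And>x. x \<noteq> 0 \<Longrightarrow> cmod x < 1 \<Longrightarrow> (\<lambda>n. a n * x ^ n) sums 0"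
  shows "a 0 = 0"
proof -
  have "((\<lambda>x::complex. 0) \<longlongrightarrow> a 0) (at 0)"
    using powser_limit_0_strong[where s=1 and a=a and f="\<lambda>x. 0"] assms by simp
  then have "0 = a 0" by (rule LIM_const_eq)
  then show ?thesis by simp
qed

lemma scalar_ps_zero:
  fixes a :: "nat \<Rightarrow> complex"
  assumes "\<And>x. x \<noteq> 0 \<Longrightarrow> cmod x < 1 \<Longrightarrow> (\<lambda>n. a n * x ^ n) sums 0"
  shows "a k = 0"
  using assms
proof (induction k arbitrary: a)
  case 0 then show ?case by (rule scalar_ps_zero0)
next
  case (Suc k)
  have a0: "a 0 = 0" using Suc.prems by (rule scalar_ps_zero0)
  have "(\<lambda>n. a (Suc n) * x ^ n) sums 0" if x: "x \<noteq> 0" "cmod x < 1" for x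
  proof -
    have "(\<lambda>n. a n * x ^ n) sums (0 + 0)" using Suc.prems[OF x] by simp
    then have "(\<lambda>n. a (Suc n) * x ^ Suc n) sums 0"
      using sums_Suc_iff[where f="\<lambda>n. a n * x ^ n" and s=0] a0 by simp
    then have "(\<lambda>n. inverse x * (a (Suc n) * x ^ Suc n)) sums (inverse x * 0)"
      by (rule sums_mult)
    moreover have "(\<lambda>n. inverse x * (a (Suc n) * x ^ Suc n)) = (\<lambda>n. a (Suc n) * x ^ n)"
    proof
      fix n
      have "inverse x * (a (Suc n) * x ^ Suc n) = a (Suc n) * x ^ n * (inverse x * x)"
        by (simp add: algebra_simps)
      then show "inverse x * (a (Suc n) * x ^ Suc n) = a (Suc n) * x ^ n" using x by simp
    qed
    ultimately show ?thesis by simp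
  qed
  then show ?case using Suc.IH[of "\<lambda>n. a (Suc n)"] by simp
qed

lemma ps_unique:
  fixes c d :: "nat \<Rightarrow> 'a::complex_hilbert"
  assumes Mc: "\<And>n. norm (c n) \<le> M" and Md: "\<And>n. norm (d n) \<le> N"
    and eq: "\<And>z. cmod z < 1 \<Longrightarrow> power_ser c z = power_ser d z"
  shows "c = d"
proof
  fix k
  have inner0: "cinner y (c k) - cinner y (d k) = 0" for y
  proof (rule scalar_ps_zero[where a="\<lambda>n. cinner y (c n) - cinner y (d n)"])
    fix x :: complex assume x: "x \<noteq> 0" "cmod x < 1"
    have s1: "(\<lambda>n. cinner y (x ^ n *\<^sub>C c n)) sums cinner y (power_ser c x)"
      by (rule bounded_linear.sums[OF bounded_linear_cinner ps_sums[OF Mc x(2)]])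
    have s2: "(\<lambda>n. cinner y (x ^ n *\<^sub>C d n)) sums cinner y (power_ser c x)"
      using bounded_linear.sums[OF bounded_linear_cinner ps_sums[OF Md x(2)]] eq[OF x(2)] by simp
    have "(\<lambda>n. cinner y (x ^ n *\<^sub>C c n) - cinner y (x ^ n *\<^sub>C d n)) sums 0"
      using sums_diff[OF s1 s2] by simp
    then show "(\<lambda>n. (cinner y (c n) - cinner y (d n)) * x ^ n) sums 0"
      by (simp add: cinner_scaleC_right algebra_simps)
  qed
  have "cinner (c k - d k) (c k - d k) = 0"
    using inner0[of "c k - d k"] by (simp add: cinner_diff_right)
  then show "c k = d k" by (simp add: cinner_self_eq_0)
qed

definition ps_fun :: "(nat \<Rightarrow> 'a::complex_hilbert) \<Rightarrow> complex \<Rightarrow> 'a" where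
  "ps_fun c = (\<lambda>z. if cmod z < 1 then power_ser c z else 0)"

lemma hardy2_iff: "f \<in> hardy2 \<longleftrightarrow> (\<exists>c. sq_summable c \<and> f = ps_fun c)"
  unfolding hardy2_def ps_fun_def fun_eq_iff by simp

lemma hardy2_ps: "sq_summable c \<Longrightarrow> ps_fun c \<in> hardy2"
  by (auto simp: hardy2_iff)

lemma h2_coeffs_ps:
  assumes c: "sq_summable c" shows "h2_coeffs (ps_fun c) = c"
  unfolding h2_coeffs_def
proof (rule the_equality)
  show "sq_summable c \<and> (\<forall>z. cmod z < 1 \<longrightarrow> ps_fun c z = power_ser c z)"
    using c by (simp add: ps_fun_def)
  fix d assume d: "sq_summable d \<and> (\<forall>z. cmod z < 1 \<longrightarrow> ps_fun c z = power_ser d z)"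
  obtain M where M: "\<And>n. norm (c n) \<le> M" using sq_summable_bounded[OF c] by blast
  obtain N where N: "\<And>n. norm (d n) \<le> N" using sq_summable_bounded d by blast
  show "d = c" by (rule ps_unique[OF N M]) (use d in \<open>simp add: ps_fun_def\<close>)
qed

lemma hardy2_E:
  assumes "f \<in> hardy2"
  shows "sq_summable (h2_coeffs f)" "f = ps_fun (h2_coeffs f)"
proof -
  obtain c where c: "sq_summable c" "f = ps_fun c" using assms hardy2_iff by blast
  then show "sq_summable (h2_coeffs f)" "f = ps_fun (h2_coeffs f)" by (simp_all add: h2_coeffs_ps)
qed



definition mono_c :: "nat \<Rightarrow> 'a::complex_hilbert \<Rightarrow> nat \<Rightarrow> 'a" where
  "mono_c n e = (\<lambda>m. if m = n then e else 0)"

definition mon :: "nat \<Rightarrow> 'a::complex_hilbert \<Rightarrow> complex \<Rightarrow> 'a" where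
  "mon n e = (\<lambda>z. if cmod z < 1 then z ^ n *\<^sub>C e else 0)"

definition cst :: "'a::complex_hilbert \<Rightarrow> complex \<Rightarrow> 'a" where
  "cst e = (\<lambda>z. if cmod z < 1 then e else 0)"

definition sc :: "(nat \<Rightarrow> 'a::complex_hilbert) \<Rightarrow> nat \<Rightarrow> 'a" where
  "sc c = (\<lambda>n. case n of 0 \<Rightarrow> 0 | Suc m \<Rightarrow> c m)"

lemma sq_summable_mono_c: "sq_summable (mono_c n e)"
proof -
  have "(\<lambda>m. (norm (mono_c n e m))\<^sup>2) = (\<lambda>m. if m = n then (norm e)\<^sup>2 else 0)"
    by (auto simp: mono_c_def)
  then show ?thesis unfolding sq_summable_def by simp
qed

lemma power_ser_mono_c: "power_ser (mono_c n e) z = z ^ n *\<^sub>C e"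
proof -
  have "(\<lambda>m. z ^ m *\<^sub>C mono_c n e m) = (\<lambda>m. if m = n then z ^ m *\<^sub>C e else 0)"
    by (auto simp: mono_c_def)
  then have "(\<lambda>m. z ^ m *\<^sub>C mono_c n e m) sums (z ^ n *\<^sub>C e)"
    using sums_single[of n "\<lambda>m. z ^ m *\<^sub>C e"] by simp
  then show ?thesis unfolding power_ser_def by (rule sums_unique[symmetric])
qed

lemma mon_ps: "mon n e = ps_fun (mono_c n e)"
  by (simp add: mon_def ps_fun_def power_ser_mono_c cong: if_cong)

lemma mon_hardy2: "mon n e \<in> hardy2"
  by (simp add: mon_ps hardy2_ps sq_summable_mono_c)

lemma h2_coeffs_mon: "h2_coeffs (mon n e) = mono_c n e"
  by (simp add: mon_ps h2_coeffs_ps sq_summable_mono_c)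

lemma cst_mon: "cst e = mon 0 e"
  by (simp add: cst_def mon_def scaleC_one cong: if_cong)

lemma cst_hardy2: "cst e \<in> hardy2"
  by (simp add: cst_mon mon_hardy2)

lemma sq_summable_sc: "sq_summable c \<Longrightarrow> sq_summable (sc c)"
  unfolding sq_summable_def
  by (subst summable_Suc_iff[symmetric]) (simp add: sc_def)

lemma power_ser_sc:
  assumes M: "\<And>n. norm (c n) \<le> M" and z: "cmod z < 1"
  shows "power_ser (sc c) z = z *\<^sub>C power_ser c z"
proof -
  have "(\<lambda>n. z *\<^sub>C (z ^ n *\<^sub>C c n)) sums (z *\<^sub>C power_ser c z)"
    by (rule bounded_linear.sums[OF bounded_linear_scaleC ps_sums[OF M z]])
  moreover have "z *\<^sub>C (z ^ n *\<^sub>C c n) = z ^ Suc n *\<^sub>C sc c (Suc n)" for n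
    by (simp add: sc_def scaleC_scaleC)
  ultimately have "(\<lambda>n. z ^ Suc n *\<^sub>C sc c (Suc n)) sums (z *\<^sub>C power_ser c z)" by simp
  then have "(\<lambda>n. z ^ n *\<^sub>C sc c n) sums (z *\<^sub>C power_ser c z + z ^ 0 *\<^sub>C sc c 0)"
    by (rule sums_Suc_iff[THEN iffD1])
  then have "(\<lambda>n. z ^ n *\<^sub>C sc c n) sums (z *\<^sub>C power_ser c z)"
    by (simp add: sc_def)
  then show ?thesis unfolding power_ser_def by (rule sums_unique[symmetric])
qed

lemma shift_ps:
  assumes c: "sq_summable c" shows "shift_op (ps_fun c) = ps_fun (sc c)"
proof -
  obtain M where M: "\<And>n. norm (c n) \<le> M" using sq_summable_bounded[OF c] by blast
  show ?thesis
    by (auto simp: fun_eq_iff shift_op_def mult_op_def ps_fun_def power_ser_sc[OF M])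
qed

lemma shift_hardy2: "f \<in> hardy2 \<Longrightarrow> shift_op f \<in> hardy2"
  by (metis hardy2_E shift_ps hardy2_ps sq_summable_sc)

lemma h2_coeffs_shift: "f \<in> hardy2 \<Longrightarrow> h2_coeffs (shift_op f) = sc (h2_coeffs f)"
  by (metis hardy2_E shift_ps h2_coeffs_ps sq_summable_sc)

lemma shift_mon: "shift_op (mon n e) = mon (Suc n) e"
  by (simp add: fun_eq_iff shift_op_def mult_op_def mon_def scaleC_scaleC)

lemma h2_inner_mon: "h2_inner f (mon n e) = cinner (h2_coeffs f n) e"
proof -
  have "(\<lambda>m. cinner (h2_coeffs f m) (mono_c n e m)) = (\<lambda>m. if m = n then cinner (h2_coeffs f m) e else 0)"
    by (auto simp: mono_c_def fun_eq_iff)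
  then have "(\<lambda>m. cinner (h2_coeffs f m) (mono_c n e m)) sums cinner (h2_coeffs f n) e"
    using sums_single[of n "\<lambda>m. cinner (h2_coeffs f m) e"] by simp
  then show ?thesis unfolding h2_inner_def h2_coeffs_mon by (rule sums_unique[symmetric])
qed

lemma h2_coeffs_cst: "h2_coeffs (cst e) = mono_c 0 e"
  by (simp add: cst_mon h2_coeffs_mon)

lemma h2_inner_cst_cst: "h2_inner (cst e) (cst e') = cinner e e'"
  by (simp add: cst_mon[of e'] h2_inner_mon h2_coeffs_cst mono_c_def)

lemma h2_inner_cst_shift:
  assumes h: "h \<in> hardy2" shows "h2_inner (cst e) (shift_op h) = 0"
proof -
  have "(\<lambda>m. cinner (h2_coeffs (cst e) m) (h2_coeffs (shift_op h) m)) = (\<lambda>m. 0)"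
    by (auto simp: fun_eq_iff h2_coeffs_shift[OF h] h2_coeffs_cst mono_c_def sc_def split: nat.split)
  then show ?thesis unfolding h2_inner_def by simp
qed

lemma ortho_const:
  assumes g: "g \<in> hardy2" and orth: "\<And>h. h \<in> hardy2 \<Longrightarrow> h2_inner g (shift_op h) = 0"
  shows "g = cst (g 0)"
proof -
  let ?c = "h2_coeffs g"
  have z: "?c (Suc k) = 0" for k
  proof -
    have "h2_inner g (shift_op (mon k (?c (Suc k)))) = 0" by (rule orth[OF mon_hardy2])
    then have "cinner (?c (Suc k)) (?c (Suc k)) = 0" by (simp add: shift_mon h2_inner_mon)
    then show ?thesis by (simp add: cinner_self_eq_0)
  qed
  have "?c = mono_c 0 (?c 0)"
  proof
    fix m show "?c m = mono_c 0 (?c 0) m" by (cases m) (simp_all add: mono_c_def z)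
  qed
  then have "g = mon 0 (?c 0)" using hardy2_E(2)[OF g] by (simp add: mon_ps)
  then have g1: "g = cst (?c 0)" by (simp add: cst_mon)
  have "g 0 = cst (?c 0) 0" using fun_cong[OF g1, of 0] .
  then have "g 0 = ?c 0" by (simp add: cst_def)
  then show ?thesis using g1 by simp
qed

lemma zero_hardy2: "(\<lambda>z. 0) \<in> hardy2"
proof -
  have "(\<lambda>z. 0) = cst 0" by (simp add: cst_def fun_eq_iff)
  then show ?thesis using cst_hardy2 by metis
qed

lemma add_hardy2:
  assumes f: "f \<in> hardy2" and g: "g \<in> hardy2" shows "(\<lambda>z. f z + g z) \<in> hardy2"
proof -
  obtain c where c: "sq_summable c" "f = ps_fun c" using f hardy2_iff by blast
  obtain d where d: "sq_summable d" "g = ps_fun d" using g hardy2_iff by blast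
  obtain M where M: "\<And>n. norm (c n) \<le> M" using sq_summable_bounded[OF c(1)] by blast
  obtain N where N: "\<And>n. norm (d n) \<le> N" using sq_summable_bounded[OF d(1)] by blast
  have sq: "sq_summable (\<lambda>n. c n + d n)"
    unfolding sq_summable_def
  proof (rule summable_comparison_test'[where g="\<lambda>n. 2 * (norm (c n))\<^sup>2 + 2 * (norm (d n))\<^sup>2" and N=0])
    show "summable (\<lambda>n. 2 * (norm (c n))\<^sup>2 + 2 * (norm (d n))\<^sup>2)"
      using c(1) d(1) unfolding sq_summable_def by (intro summable_add summable_mult)
    fix n
    have t: "norm (c n + d n) \<le> norm (c n) + norm (d n)" by (rule norm_triangle_ineq)
    have "(norm (c n + d n))\<^sup>2 \<le> (norm (c n) + norm (d n))\<^sup>2"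
      using t by (simp add: power_mono)
    also have "\<dots> \<le> 2 * (norm (c n))\<^sup>2 + 2 * (norm (d n))\<^sup>2"
    proof -
      have "0 \<le> (norm (c n) - norm (d n))\<^sup>2" by simp
      then show ?thesis by (simp add: power2_eq_square algebra_simps)
    qed
    finally show "norm ((norm (c n + d n))\<^sup>2) \<le> 2 * (norm (c n))\<^sup>2 + 2 * (norm (d n))\<^sup>2"
      by simp
  qed
  have "ps_fun (\<lambda>n. c n + d n) = (\<lambda>z. f z + g z)"
  proof
    fix z :: complex
    show "ps_fun (\<lambda>n. c n + d n) z = f z + g z"
    proof (cases "cmod z < 1")
      case True
      have "(\<lambda>n. z ^ n *\<^sub>C c n + z ^ n *\<^sub>C d n) sums (power_ser c z + power_ser d z)"
        by (rule sums_add[OF ps_sums[OF M True] ps_sums[OF N True]])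
      then have "(\<lambda>n. z ^ n *\<^sub>C (c n + d n)) sums (power_ser c z + power_ser d z)"
        by (simp add: scaleC_add_right)
      then have "power_ser (\<lambda>n. c n + d n) z = power_ser c z + power_ser d z"
        unfolding power_ser_def by (rule sums_unique[symmetric])
      then show ?thesis using True by (simp add: c(2) d(2) ps_fun_def)
    next
      case False then show ?thesis by (simp add: c(2) d(2) ps_fun_def)
    qed
  qed
  then show ?thesis using hardy2_ps[OF sq] by simp
qed

lemma sum_hardy2:
  assumes "finite S" "\<And>l. l \<in> S \<Longrightarrow> F l \<in> hardy2"
  shows "(\<lambda>z. \<Sum>l\<in>S. F l z) \<in> hardy2"
  using assms
proof (induction S rule: finite_induct)
  case empty then show ?case using zero_hardy2 by simp
next
  case (insert x S)
  then show ?case using add_hardy2[of "F x" "\<lambda>z. \<Sum>l\<in>S. F l z"] by simp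
qed



lemma additive_sum:
  assumes "\<And>x y. f (x + y) = f x + f y" "f 0 = 0"
  shows "f (sum g S) = (\<Sum>x\<in>S. f (g x))"
  by (induction S rule: infinite_finite_induct) (simp_all add: assms)

lemma cadjoint_left:
  fixes W :: "'a::complex_hilbert \<Rightarrow> 'b::complex_hilbert"
  assumes "\<And>x y. cinner (W x) (W y) = cinner x y"
  shows "cadjoint W (W x) = x"
  unfolding cadjoint_def
proof (rule the_equality)
  show "\<forall>z. cinner (W z) (W x) = cinner z x" using assms by simp
  fix x' assume "\<forall>z. cinner (W z) (W x) = cinner z x'"
  then have "\<And>z. cinner z x' = cinner z x" using assms by simp
  then show "x' = x" by (rule cinner_eq_right)
qed

lemma norm_from_inner:
  fixes W :: "'a::complex_hilbert \<Rightarrow> 'b::complex_hilbert"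
  assumes "cinner (W x) (W x) = cinner x x"
  shows "norm (W x) = norm x"
proof -
  have "complex_of_real ((norm (W x))\<^sup>2) = complex_of_real ((norm x)\<^sup>2)"
    using assms by (simp only: cinner_self_norm)
  then have "(norm (W x))\<^sup>2 = (norm x)\<^sup>2" by (rule of_real_eq_iff[THEN iffD1])
  then show ?thesis by (simp add: power2_eq_iff_nonneg)
qed

lemma poly_coeffs_zero:
  fixes a :: "nat \<Rightarrow> complex"
  assumes "\<And>z. cmod z < 1 \<Longrightarrow> (\<Sum>l\<le>p. a l * z ^ l) = 0"
  shows "\<forall>l\<le>p. a l = 0"
proof -
  have "infinite (UNIV \<inter> ball (0::complex) 1)"
    using islimpt_eq_infinite_ball[of 0 UNIV] islimpt_UNIV[of 0] zero_less_one by blast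
  then have "infinite (ball (0::complex) 1)" by simp
  moreover have "ball (0::complex) 1 \<subseteq> {z. (\<Sum>l\<le>p. a l * z ^ l) = 0}"
    using assms by auto
  ultimately have "infinite {z. (\<Sum>l\<le>p. a l * z ^ l) = 0}" using finite_subset by blast
  then show ?thesis using polyfun_finite_roots[of a p] by auto
qed

lemma vec_poly_eq:
  fixes b d :: "nat \<Rightarrow> 'a::complex_hilbert"
  assumes "\<And>z. cmod z < 1 \<Longrightarrow> (\<Sum>l\<le>p. z ^ l *\<^sub>C b l) = (\<Sum>l\<le>p. z ^ l *\<^sub>C d l)"
  shows "\<forall>l\<le>p. b l = d l"
proof (intro allI impI)
  fix l assume l: "l \<le> p"
  have "\<forall>l\<le>p. cinner y (b l) - cinner y (d l) = 0" for y
  proof (rule poly_coeffs_zero)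
    fix z :: complex assume z: "cmod z < 1"
    have "cinner y (\<Sum>l\<le>p. z ^ l *\<^sub>C b l) = cinner y (\<Sum>l\<le>p. z ^ l *\<^sub>C d l)"
      using assms[OF z] by simp
    then have "(\<Sum>l\<le>p. cinner y (z ^ l *\<^sub>C b l)) = (\<Sum>l\<le>p. cinner y (z ^ l *\<^sub>C d l))"
      by (simp add: additive_sum[of "cinner y"] cinner_add_right)
    then show "(\<Sum>l\<le>p. (cinner y (b l) - cinner y (d l)) * z ^ l) = 0"
      by (simp add: cinner_scaleC_right algebra_simps sum_subtractf)
  qed
  then have "cinner (b l - d l) (b l) - cinner (b l - d l) (d l) = 0" using l by blast
  then have "cinner (b l - d l) (b l - d l) = 0" by (simp add: cinner_diff_right)
  then show "b l = d l" by (simp add: cinner_self_eq_0)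
qed



lemma forward:
  fixes U :: "(complex \<Rightarrow> 'e::complex_hilbert) \<Rightarrow> (complex \<Rightarrow> 'f::complex_hilbert)"
    and A :: "nat \<Rightarrow> nat \<Rightarrow> 'e \<Rightarrow> 'e"
    and At :: "nat \<Rightarrow> nat \<Rightarrow> 'f \<Rightarrow> 'f"
  assumes hU: "h2_unitary U"
    and mU: "\<forall>i\<in>I. \<forall>f\<in>hardy2. U (mult_op (op_poly p (A i)) f) = mult_op (op_poly p (At i)) (U f)"
    and sU: "\<forall>f\<in>hardy2. U (shift_op f) = shift_op (U f)"
  shows "\<exists>W. unitary W \<and> (\<forall>i\<in>I. \<forall>l\<le>p. W \<circ> A i l \<circ> cadjoint W = At i l)"
proof -
  from hU have im: "U ` hardy2 = hardy2"
    and add: "\<forall>f\<in>hardy2. \<forall>g\<in>hardy2. U (\<lambda>z. f z + g z) = (\<lambda>z. U f z + U g z)"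
    and scl: "\<forall>f\<in>hardy2. \<forall>c. U (\<lambda>z. c *\<^sub>C f z) = (\<lambda>z. c *\<^sub>C U f z)"
    and inn: "\<forall>f\<in>hardy2. \<forall>g\<in>hardy2. h2_inner (U f) (U g) = h2_inner f g"
    unfolding h2_unitary_def by auto
  have Uh: "U f \<in> hardy2" if "f \<in> hardy2" for f using im that by blast
  have Upre: "\<exists>f\<in>hardy2. U f = g" if "g \<in> hardy2" for g using im that by (metis imageE)
  define W where "W e = U (cst e) 0" for e
  have UW: "U (cst e) = cst (W e)" for e
  proof -
    have "U (cst e) = cst (U (cst e) 0)"
    proof (rule ortho_const)
      show "U (cst e) \<in> hardy2" by (rule Uh[OF cst_hardy2])
      fix h :: "complex \<Rightarrow> 'f" assume h: "h \<in> hardy2"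
      obtain h' where h': "h' \<in> hardy2" "U h' = h" using Upre[OF h] by blast
      have "h2_inner (U (cst e)) (shift_op h) = h2_inner (U (cst e)) (U (shift_op h'))"
        using sU h' by simp
      also have "\<dots> = h2_inner (cst e) (shift_op h')"
        using inn cst_hardy2 shift_hardy2[OF h'(1)] by blast
      also have "\<dots> = 0" by (rule h2_inner_cst_shift[OF h'(1)])
      finally show "h2_inner (U (cst e)) (shift_op h) = 0" .
    qed
    then show ?thesis by (simp add: W_def)
  qed
  have Winner: "cinner (W e) (W e') = cinner e e'" for e e'
  proof -
    have "h2_inner (U (cst e)) (U (cst e')) = h2_inner (cst e) (cst e')"
      using inn cst_hardy2 by blast
    then show ?thesis by (simp add: UW h2_inner_cst_cst)
  qed
  have Wsurj: "surj W"
  proof -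
    have "y \<in> range W" for y
    proof -
      obtain g where g: "g \<in> hardy2" "U g = cst y" using Upre[OF cst_hardy2] by blast
      have "g = cst (g 0)"
      proof (rule ortho_const[OF g(1)])
        fix h :: "complex \<Rightarrow> 'e" assume h: "h \<in> hardy2"
        have "h2_inner g (shift_op h) = h2_inner (U g) (U (shift_op h))"
          using inn g(1) shift_hardy2[OF h] by simp
        also have "\<dots> = h2_inner (cst y) (shift_op (U h))" using g(2) sU h by simp
        also have "\<dots> = 0" by (rule h2_inner_cst_shift[OF Uh[OF h]])
        finally show "h2_inner g (shift_op h) = 0" .
      qed
      then have "U g = cst (W (g 0))" using UW by metis
      then have "cst y = cst (W (g 0))" using g(2) by simp
      then have "cst y 0 = cst (W (g 0)) 0" by simp
      then have "y = W (g 0)" by (simp add: cst_def)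
      then show ?thesis by blast
    qed
    then show ?thesis by blast
  qed
  have Wadd: "W (x + y) = W x + W y" for x y
  proof -
    have "cst (x + y) = (\<lambda>z. cst x z + cst y z)" by (simp add: cst_def fun_eq_iff)
    moreover have "U (\<lambda>z. cst x z + cst y z) = (\<lambda>z. U (cst x) z + U (cst y) z)"
      using add cst_hardy2 by blast
    ultimately have "U (cst (x + y)) = (\<lambda>z. U (cst x) z + U (cst y) z)" by simp
    then have "cst (W (x + y)) = (\<lambda>z. cst (W x) z + cst (W y) z)" by (simp add: UW)
    then have "cst (W (x + y)) 0 = cst (W x) 0 + cst (W y) 0" by (rule fun_cong)
    then show ?thesis by (simp add: cst_def)
  qed
  have Wscl: "W (c *\<^sub>C x) = c *\<^sub>C W x" for c x
  proof -
    have "cst (c *\<^sub>C x) = (\<lambda>z. c *\<^sub>C cst x z)" by (simp add: cst_def fun_eq_iff)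
    moreover have "U (\<lambda>z. c *\<^sub>C cst x z) = (\<lambda>z. c *\<^sub>C U (cst x) z)"
      using scl cst_hardy2 by blast
    ultimately have "U (cst (c *\<^sub>C x)) = (\<lambda>z. c *\<^sub>C U (cst x) z)" by simp
    then have "cst (W (c *\<^sub>C x)) = (\<lambda>z. c *\<^sub>C cst (W x) z)" by (simp add: UW)
    then have "cst (W (c *\<^sub>C x)) 0 = c *\<^sub>C cst (W x) 0" by (rule fun_cong)
    then show ?thesis by (simp add: cst_def)
  qed
  have Wnorm: "norm (W x) = norm x" for x
    by (rule norm_from_inner) (rule Winner)
  have Wu: "unitary W"
    unfolding unitary_def bounded_clinear_def
    using Wadd Wscl Wnorm Wsurj Winner by (auto intro!: exI[of _ 1])
  have Wmon: "U (mon l e) = mon l (W e)" for l e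
  proof (induction l)
    case 0 then show ?case by (simp add: cst_mon[symmetric] UW)
  next
    case (Suc l)
    have "U (mon (Suc l) e) = U (shift_op (mon l e))" by (simp add: shift_mon)
    also have "\<dots> = shift_op (U (mon l e))" using sU mon_hardy2 by blast
    also have "\<dots> = mon (Suc l) (W e)" by (simp add: Suc shift_mon)
    finally show ?case .
  qed
  have U0: "U (\<lambda>z. 0) = (\<lambda>z. 0)"
  proof -
    have "U (\<lambda>z. 0 *\<^sub>C cst 0 z) = (\<lambda>z. 0 *\<^sub>C U (cst 0) z)" using scl cst_hardy2 by blast
    then show ?thesis by simp
  qed
  have Usum: "U (\<lambda>z. \<Sum>l\<in>S. F l z) = (\<lambda>z. \<Sum>l\<in>S. U (F l) z)"
    if "finite S" "\<And>l. l \<in> S \<Longrightarrow> F l \<in> hardy2" for S and F :: "nat \<Rightarrow> complex \<Rightarrow> 'e"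
    using that
  proof (induction S rule: finite_induct)
    case empty then show ?case using U0 by simp
  next
    case (insert x S)
    have "U (\<lambda>z. \<Sum>l\<in>insert x S. F l z) = U (\<lambda>z. F x z + (\<Sum>l\<in>S. F l z))"
      using insert.hyps by simp
    also have "\<dots> = (\<lambda>z. U (F x) z + U (\<lambda>z. \<Sum>l\<in>S. F l z) z)"
      using add insert.prems sum_hardy2[OF insert.hyps(1), of F] by simp
    also have "\<dots> = (\<lambda>z. \<Sum>l\<in>insert x S. U (F l) z)"
      using insert by simp
    finally show ?case .
  qed
  have key: "W (A i l e) = At i l (W e)" if i: "i \<in> I" and l: "l \<le> p" for i l e
  proof -
    have m1: "mult_op (op_poly p (A i)) (cst e) = (\<lambda>z. \<Sum>l\<le>p. mon l (A i l e) z)"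
      by (auto simp: fun_eq_iff mult_op_def op_poly_def cst_def mon_def)
    have "U (mult_op (op_poly p (A i)) (cst e)) = mult_op (op_poly p (At i)) (U (cst e))"
      using mU i cst_hardy2 by blast
    also have "\<dots> = mult_op (op_poly p (At i)) (cst (W e))" by (simp add: UW)
    finally have "U (\<lambda>z. \<Sum>l\<le>p. mon l (A i l e) z) = mult_op (op_poly p (At i)) (cst (W e))"
      by (simp add: m1)
    moreover have "U (\<lambda>z. \<Sum>l\<le>p. mon l (A i l e) z) = (\<lambda>z. \<Sum>l\<le>p. mon l (W (A i l e)) z)"
      using Usum[of "{..p}" "\<lambda>l. mon l (A i l e)", OF finite_atMost mon_hardy2] by (simp add: Wmon)
    ultimately have E: "(\<lambda>z. \<Sum>l\<le>p. mon l (W (A i l e)) z) = mult_op (op_poly p (At i)) (cst (W e))"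
      by simp
    have "(\<Sum>l\<le>p. z ^ l *\<^sub>C W (A i l e)) = (\<Sum>l\<le>p. z ^ l *\<^sub>C At i l (W e))" if z: "cmod z < 1" for z
      using fun_cong[OF E, of z] z by (simp add: mult_op_def op_poly_def cst_def mon_def)
    then show ?thesis using vec_poly_eq[where p=p and b="\<lambda>l. W (A i l e)" and d="\<lambda>l. At i l (W e)"] l by blast
  qed
  have "W \<circ> A i l \<circ> cadjoint W = At i l" if "i \<in> I" "l \<le> p" for i l
  proof
    fix y
    obtain x where x: "y = W x" using Wsurj by blast
    have "cadjoint W (W x) = x" by (rule cadjoint_left) (rule Winner)
    then show "(W \<circ> A i l \<circ> cadjoint W) y = At i l y" using key[OF that] x by simp
  qed
  then show ?thesis using Wu by blast
qed



lemma ps_map: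
  fixes W :: "'a::complex_hilbert \<Rightarrow> 'b::complex_hilbert"
  assumes c: "sq_summable c"
    and Wadd: "\<And>x y. W (x + y) = W x + W y"
    and Wscl: "\<And>a x. W (a *\<^sub>C x) = a *\<^sub>C W x"
    and Wnorm: "\<And>x. norm (W x) = norm x"
  shows "sq_summable (\<lambda>n. W (c n))" "(\<lambda>z. W (ps_fun c z)) = ps_fun (\<lambda>n. W (c n))"
proof -
  show sq: "sq_summable (\<lambda>n. W (c n))" using c by (simp add: sq_summable_def Wnorm)
  have W0: "W 0 = 0" using Wscl[of 0 0] by simp
  have blW: "bounded_linear W"
  proof (rule bounded_linear_intro[where K=1])
    show "W (x + y) = W x + W y" for x y by (rule Wadd)
    show "W (r *\<^sub>R x) = r *\<^sub>R W x" for r x by (simp add: scaleR_scaleC Wscl)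
    show "norm (W x) \<le> norm x * 1" for x by (simp add: Wnorm)
  qed
  obtain M where M: "\<And>n. norm (c n) \<le> M" using sq_summable_bounded[OF c] by blast
  show "(\<lambda>z. W (ps_fun c z)) = ps_fun (\<lambda>n. W (c n))"
  proof
    fix z :: complex
    show "W (ps_fun c z) = ps_fun (\<lambda>n. W (c n)) z"
    proof (cases "cmod z < 1")
      case True
      have "(\<lambda>n. W (z ^ n *\<^sub>C c n)) sums W (power_ser c z)"
        by (rule bounded_linear.sums[OF blW ps_sums[OF M True]])
      then have "(\<lambda>n. z ^ n *\<^sub>C W (c n)) sums W (power_ser c z)" by (simp add: Wscl)
      then have "power_ser (\<lambda>n. W (c n)) z = W (power_ser c z)"
        unfolding power_ser_def by (rule sums_unique[symmetric])
      then show ?thesis using True by (simp add: ps_fun_def)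
    next
      case False then show ?thesis by (simp add: ps_fun_def W0)
    qed
  qed
qed

lemma backward:
  fixes W :: "'e::complex_hilbert \<Rightarrow> 'f::complex_hilbert"
    and A :: "nat \<Rightarrow> nat \<Rightarrow> 'e \<Rightarrow> 'e"
    and At :: "nat \<Rightarrow> nat \<Rightarrow> 'f \<Rightarrow> 'f"
  assumes Wu: "unitary W"
    and eqs: "\<forall>i\<in>I. \<forall>l\<le>p. W \<circ> A i l \<circ> cadjoint W = At i l"
  shows "\<exists>U :: (complex \<Rightarrow> 'e) \<Rightarrow> (complex \<Rightarrow> 'f).
            h2_unitary U \<and>
            (\<forall>i\<in>I. \<forall>f\<in>hardy2.
               U (mult_op (op_poly p (A i)) f) = mult_op (op_poly p (At i)) (U f)) \<and>
            (\<forall>f\<in>hardy2. U (shift_op f) = shift_op (U f))"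
proof -
  from Wu have Wadd: "\<And>x y. W (x + y) = W x + W y"
    and Wscl: "\<And>a x. W (a *\<^sub>C x) = a *\<^sub>C W x"
    and Wsurj: "surj W"
    and Winner: "\<And>x y. cinner (W x) (W y) = cinner x y"
    unfolding unitary_def bounded_clinear_def by auto
  have W0: "W 0 = 0" using Wscl[of 0 0] by simp
  have Wnorm: "norm (W x) = norm x" for x by (rule norm_from_inner) (rule Winner)
  define V where "V = cadjoint W"
  have VW: "V (W x) = x" for x unfolding V_def by (rule cadjoint_left) (rule Winner)
  have WV: "W (V y) = y" for y
  proof -
    obtain x where "y = W x" using Wsurj by blast
    then show ?thesis by (simp add: VW)
  qed
  have Vnorm: "norm (V y) = norm y" for y using Wnorm[of "V y"] by (simp add: WV)
  have AW: "At i l (W x) = W (A i l x)" if "i \<in> I" "l \<le> p" for i l x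
  proof -
    have "(W \<circ> A i l \<circ> cadjoint W) (W x) = At i l (W x)" using eqs that by simp
    then show ?thesis by (simp add: VW[unfolded V_def])
  qed
  have Wsum: "W (sum g S) = (\<Sum>x\<in>S. W (g x))" for g and S :: "nat set"
    by (rule additive_sum) (simp_all add: Wadd W0)
  define U where "U f = (\<lambda>z. W (f z))" for f :: "complex \<Rightarrow> 'e"
  have im: "U ` hardy2 = hardy2"
  proof
    show "U ` hardy2 \<subseteq> hardy2"
    proof
      fix g assume "g \<in> U ` hardy2"
      then obtain f where f: "f \<in> hardy2" "g = U f" by blast
      obtain c where c: "sq_summable c" "f = ps_fun c" using f(1) hardy2_iff by blast
      have "g = ps_fun (\<lambda>n. W (c n))"
        using ps_map(2)[OF c(1) Wadd Wscl Wnorm] f(2) c(2) by (simp add: U_def)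
      then show "g \<in> hardy2" using hardy2_ps[OF ps_map(1)[OF c(1) Wadd Wscl Wnorm]] by simp
    qed
    show "hardy2 \<subseteq> U ` hardy2"
    proof
      fix g :: "complex \<Rightarrow> 'f" assume "g \<in> hardy2"
      then obtain d where d: "sq_summable d" "g = ps_fun d" using hardy2_iff by blast
      have sqV: "sq_summable (\<lambda>n. V (d n))" using d(1) by (simp add: sq_summable_def Vnorm)
      have "U (ps_fun (\<lambda>n. V (d n))) = ps_fun (\<lambda>n. W (V (d n)))"
        using ps_map(2)[OF sqV Wadd Wscl Wnorm] by (simp add: U_def)
      then have "U (ps_fun (\<lambda>n. V (d n))) = g" by (simp add: WV d(2))
      moreover have "ps_fun (\<lambda>n. V (d n)) \<in> hardy2" by (rule hardy2_ps[OF sqV])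
      ultimately show "g \<in> U ` hardy2" by blast
    qed
  qed
  have coeffs: "h2_coeffs (U f) = (\<lambda>n. W (h2_coeffs f n))" if "f \<in> hardy2" for f
  proof -
    have "U f = ps_fun (\<lambda>n. W (h2_coeffs f n))"
      using ps_map(2)[OF hardy2_E(1)[OF that] Wadd Wscl Wnorm] hardy2_E(2)[OF that]
      by (simp add: U_def)
    then show ?thesis using h2_coeffs_ps[OF ps_map(1)[OF hardy2_E(1)[OF that] Wadd Wscl Wnorm]] by simp
  qed
  have hU: "h2_unitary U"
    unfolding h2_unitary_def
  proof (intro conjI ballI allI)
    show "U ` hardy2 = hardy2" by (rule im)
    show "U (\<lambda>z. f z + g z) = (\<lambda>z. U f z + U g z)" for f g by (simp add: U_def Wadd)
    show "U (\<lambda>z. c *\<^sub>C f z) = (\<lambda>z. c *\<^sub>C U f z)" for f c by (simp add: U_def Wscl)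
    show "h2_inner (U f) (U g) = h2_inner f g" if "f \<in> hardy2" "g \<in> hardy2" for f g
      by (simp add: h2_inner_def coeffs that Winner)
  qed
  have mult: "U (mult_op (op_poly p (A i)) f) = mult_op (op_poly p (At i)) (U f)" if i: "i \<in> I" for i f
    by (simp add: fun_eq_iff U_def mult_op_def op_poly_def W0 Wsum Wscl AW[OF i])
  have shift: "U (shift_op f) = shift_op (U f)" for f
    by (simp add: fun_eq_iff U_def shift_op_def mult_op_def W0 Wscl)
  show ?thesis using hU mult shift by blast
qed


theorem theorem3p7:
  fixes p n :: nat
    and A :: "nat \<Rightarrow> nat \<Rightarrow> 'e::complex_hilbert \<Rightarrow> 'e"
    and At :: "nat \<Rightarrow> nat \<Rightarrow> 'f::complex_hilbert \<Rightarrow> 'f"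
  assumes "p \<ge> 1" and "n > 1"
    and "\<And>i l. i \<in> {1..n-1} \<Longrightarrow> l \<le> p \<Longrightarrow> bounded_clinear (A i l)"
    and "\<And>i l. i \<in> {1..n-1} \<Longrightarrow> l \<le> p \<Longrightarrow> bounded_clinear (At i l)"
  shows "(\<exists>U :: (complex \<Rightarrow> 'e) \<Rightarrow> (complex \<Rightarrow> 'f).
            h2_unitary U \<and>
            (\<forall>i\<in>{1..n-1}. \<forall>f\<in>hardy2.
               U (mult_op (op_poly p (A i)) f) = mult_op (op_poly p (At i)) (U f)) \<and>
            (\<forall>f\<in>hardy2. U (shift_op f) = shift_op (U f)))
     \<longleftrightarrow>
     (\<exists>W :: 'e \<Rightarrow> 'f. unitary W \<and>
        (\<forall>i\<in>{1..n-1}. \<forall>l\<le>p. W \<circ> A i l \<circ> cadjoint W = At i l))"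
proof (rule iffI)
  assume "\<exists>U :: (complex \<Rightarrow> 'e) \<Rightarrow> (complex \<Rightarrow> 'f).
            h2_unitary U \<and>
            (\<forall>i\<in>{1..n-1}. \<forall>f\<in>hardy2.
               U (mult_op (op_poly p (A i)) f) = mult_op (op_poly p (At i)) (U f)) \<and>
            (\<forall>f\<in>hardy2. U (shift_op f) = shift_op (U f))"
  then obtain U :: "(complex \<Rightarrow> 'e) \<Rightarrow> (complex \<Rightarrow> 'f)" where
    hU: "h2_unitary U" and
    mU: "\<forall>i\<in>{1..n-1}. \<forall>f\<in>hardy2.
               U (mult_op (op_poly p (A i)) f) = mult_op (op_poly p (At i)) (U f)" and
    sU: "\<forall>f\<in>hardy2. U (shift_op f) = shift_op (U f)"
    by (elim exE conjE)
  show "\<exists>W :: 'e \<Rightarrow> 'f. unitary W \<and>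
        (\<forall>i\<in>{1..n-1}. \<forall>l\<le>p. W \<circ> A i l \<circ> cadjoint W = At i l)"
    by (rule forward[OF hU mU sU])
next
  assume "\<exists>W :: 'e \<Rightarrow> 'f. unitary W \<and>
        (\<forall>i\<in>{1..n-1}. \<forall>l\<le>p. W \<circ> A i l \<circ> cadjoint W = At i l)"
  then obtain W :: "'e \<Rightarrow> 'f" where Wu: "unitary W" and
    eqs: "\<forall>i\<in>{1..n-1}. \<forall>l\<le>p. W \<circ> A i l \<circ> cadjoint W = At i l"
    by (elim exE conjE)
  show "\<exists>U :: (complex \<Rightarrow> 'e) \<Rightarrow> (complex \<Rightarrow> 'f).
            h2_unitary U \<and>
            (\<forall>i\<in>{1..n-1}. \<forall>f\<in>hardy2.
               U (mult_op (op_poly p (A i)) f) = mult_op (op_poly p (At i)) (U f)) \<and>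
            (\<forall>f\<in>hardy2. U (shift_op f) = shift_op (U f))"
    by (rule backward[OF Wu eqs])
qed

end
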